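(* For every integer $r\ge1$, $\mathrm{Var}(\mu^{(r)})\ge\frac b4\lambda(r)$.
   Context: Fix an integer $b\ge2$. For $n\in\mathbb{N}$ with base-$b$ digits $n_k$, $s(n):=\sum_kn_k$. For $r,n\in\mathbb{N}$, $\Delta^{(r)}(n):=s(n+r)-s(n)$, and $\mu^{(r)}(d):=\lim_{N\to\infty}\frac1N|\{n<N:\Delta^{(r)}(n)=d\}|$ for $d\in\mathbb{Z}$; these limits exist and $\mu^{(r)}$ is a probability measure on $\mathbb{Z}$ with finite moments; $\mathrm{Var}(\mu^{(r)})$ is its variance. Blocks: write the expansion of $r\ge1$ as the digit string $r_\ell\cdots r_0$, $r_\ell\neq0$. A block is either a maximal run of consecutive $0$ digits (a block of $0$'s), or a maximal run of consecutive digits equal to $b-1$, or (when $b\ge3$) a single digit with value in $\{1,\dots,b-2\}$. $\lambda(r)$ is the number of blocks of $r$ that are not blocks of $0$'s (non-zero blocks). *)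

theory Defs
  imports "HOL-Analysis.Analysis"
begin

definition digit :: "nat \<Rightarrow> nat \<Rightarrow> nat \<Rightarrow> nat" where
  "digit b n k = n div b ^ k mod b"

text \<open>Base-b digit sum; for b \<ge> 2 all digits at positions k > n vanish since b^k > n.\<close>
definition digsum :: "nat \<Rightarrow> nat \<Rightarrow> int" where
  "digsum b n = int (\<Sum>k\<le>n. digit b n k)"

definition Delta :: "nat \<Rightarrow> nat \<Rightarrow> nat \<Rightarrow> int" where
  "Delta b r n = digsum b (n + r) - digsum b n"

definition mu :: "nat \<Rightarrow> nat \<Rightarrow> int \<Rightarrow> real" where
  "mu b r d = lim (\<lambda>N. real (card {n. n < N \<and> Delta b r n = d}) / real N)"

definition variance_int :: "(int \<Rightarrow> real) \<Rightarrow> real" where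
  "variance_int p = (\<Sum>\<^sub>\<infinity>d. (real_of_int d)^2 * p d) - (\<Sum>\<^sub>\<infinity>d. real_of_int d * p d)^2"

text \<open>lambda(r): number of non-zero blocks of the base-b expansion of r, counted by
  their starting (least significant) positions: a non-zero digit at position k starts a
  new block unless k > 0, it equals b-1 and the digit at position k-1 is also b-1
  (digits in {1..b-2} are singleton blocks; maximal runs of b-1 form one block).\<close>
definition lambda_blocks :: "nat \<Rightarrow> nat \<Rightarrow> nat" where
  "lambda_blocks b r = card {k. digit b r k \<noteq> 0 \<and>
      (k = 0 \<or> digit b r k \<noteq> b - 1 \<or> digit b r (k - 1) \<noteq> b - 1)}"

end

theory Submission
  imports Defs
begin



lemma digit_zero: "n < b ^ k \<Longrightarrow> digit b n k = 0"
  by (simp add: digit_def)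

lemma digsum_bound:
  assumes "b \<ge> 2" "n < b ^ M"
  shows "digsum b n = int (\<Sum>k<M. digit b n k)"
proof -
  have n1: "n < b ^ (n+1)"
  proof -
    have "n < 2 ^ n" by (rule less_exp)
    also have "... \<le> b ^ n" using assms(1) by (simp add: power_mono)
    also have "... \<le> b ^ (n+1)" using assms(1) by simp
    finally show ?thesis .
  qed
  have z: "digit b n k = 0" if "k \<ge> M \<or> k \<ge> n+1" for k
  proof (rule digit_zero)
    from that show "n < b ^ k"
    proof
      assume "k \<ge> M" then have "b ^ M \<le> b ^ k" using assms(1) by (intro power_increasing) auto
      then show ?thesis using assms(2) by simp
    next
      assume "k \<ge> n+1" then have "b ^ (n+1) \<le> b ^ k" using assms(1) by (intro power_increasing) auto
      then show ?thesis using n1 by simp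
    qed
  qed
  have "(\<Sum>k\<le>n. digit b n k) = (\<Sum>k<max M (n+1). digit b n k)"
  proof (rule sum.mono_neutral_left)
    show "\<forall>i\<in>{..<max M (n + 1)} - {..n}. digit b n i = 0"
    proof
      fix i assume "i \<in> {..<max M (n + 1)} - {..n}"
      then have "i \<ge> n+1" by auto
      then show "digit b n i = 0" using z by blast
    qed
  qed auto
  also have "... = (\<Sum>k<M. digit b n k)"
  proof (rule sum.mono_neutral_right)
    show "\<forall>i\<in>{..<max M (n + 1)} - {..<M}. digit b n i = 0"
    proof
      fix i assume "i \<in> {..<max M (n + 1)} - {..<M}"
      then have "i \<ge> M" by auto
      then show "digit b n i = 0" using z by blast
    qed
  qed auto
  finally show ?thesis by (simp add: digsum_def)
qed

lemma digsum_rec: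
  assumes "b \<ge> 2"
  shows "digsum b n = int (n mod b) + digsum b (n div b)"
proof -
  have "n < 2 ^ n" by (rule less_exp)
  also have "(2::nat) ^ n \<le> b ^ n" using assms by (intro power_mono) auto
  also have "b ^ n \<le> b ^ Suc n" using assms by (intro power_increasing) auto
  finally have n1: "n < b ^ Suc n" .
  have "n div b < b ^ n"
    by (rule less_mult_imp_div_less) (use n1 in \<open>simp add: mult.commute\<close>)
  have "digsum b n = int (\<Sum>k<Suc n. digit b n k)" using digsum_bound[OF assms n1] .
  also have "(\<Sum>k<Suc n. digit b n k) = digit b n 0 + (\<Sum>k<n. digit b n (Suc k))"
    by (rule sum.lessThan_Suc_shift)
  also have "(\<Sum>k<n. digit b n (Suc k)) = (\<Sum>k<n. digit b (n div b) k)"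
    by (rule sum.cong) (simp_all add: digit_def div_mult2_eq)
  also have "int (digit b n 0 + (\<Sum>k<n. digit b (n div b) k)) = int (n mod b) + digsum b (n div b)"
    using digsum_bound[OF assms \<open>n div b < b ^ n\<close>] by (simp add: digit_def)
  finally show ?thesis .
qed

lemma digsum_0: "digsum b 0 = 0" by (simp add: digsum_def digit_def)

lemma digsum_small: "b \<ge> 2 \<Longrightarrow> x < b \<Longrightarrow> digsum b x = int x"
proof -
  assume a: "b \<ge> 2" "x < b"
  have "digsum b x = int (x mod b) + digsum b (x div b)" by (rule digsum_rec[OF a(1)])
  moreover have "x div b = 0" "x mod b = x" using a by auto
  ultimately show ?thesis by (simp add: digsum_0)
qed

lemma digsum_split:
  assumes "b \<ge> 2" "x < b ^ K"
  shows "digsum b (x + b ^ K * q) = digsum b x + digsum b q"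
  using assms(2)
proof (induction K arbitrary: x)
  case 0 then show ?case by (simp add: digsum_0)
next
  case (Suc K)
  have b0: "b > 0" using assms by simp
  have m: "(x + b ^ Suc K * q) mod b = x mod b" by (simp add: mult.assoc)
  have d: "(x + b ^ Suc K * q) div b = x div b + b ^ K * q"
    using b0 by (simp add: mult.assoc)
  have "x div b < b ^ K" using Suc.prems b0 by (simp add: div_less_iff_less_mult mult.commute)
  then have ih: "digsum b (x div b + b ^ K * q) = digsum b (x div b) + digsum b q" using Suc.IH by blast
  have "digsum b (x + b ^ Suc K * q) = int (x mod b) + digsum b (x div b + b ^ K * q)"
    using digsum_rec[OF assms(1), of "x + b ^ Suc K * q"] m d by metis
  also have "... = digsum b x + digsum b q"
    using ih digsum_rec[OF assms(1), of x] by linarith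
  finally show ?case .
qed




function tau :: "nat \<Rightarrow> nat \<Rightarrow> nat" where
  "tau b q = (if 2 \<le> b \<and> q mod b = b - 1 then Suc (tau b (q div b)) else 0)"
  by auto
termination
proof (relation "Wellfounded.measure (\<lambda>(b,q). q)")
  fix b q :: nat assume h: "2 \<le> b \<and> q mod b = b - 1"
  have "q \<noteq> 0"
  proof
    assume "q = 0" then have "b - 1 = 0" using h by simp
    then show False using h by simp
  qed
  then show "((b, q div b), b, q) \<in> Wellfounded.measure (\<lambda>(b, q). q)" using h by auto
qed auto

declare tau.simps[simp del]

lemma dvd_iff_mod_pred:
  assumes "(M::nat) > 0"
  shows "M dvd (q+1) \<longleftrightarrow> q mod M = M - 1"
proof -
  have "M dvd (q+1) \<longleftrightarrow> (q + 1) mod M = 0" by (rule dvd_eq_mod_eq_0)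
  also have "... \<longleftrightarrow> Suc (q mod M) = M" by (simp add: mod_Suc)
  also have "... \<longleftrightarrow> q mod M = M - 1" using assms by arith
  finally show ?thesis .
qed

lemma digsum_succ:
  assumes "b \<ge> 2"
  shows "digsum b (q+1) + int (b-1) * int (tau b q) = digsum b q + 1"
proof (induction q rule: less_induct)
  case (less q)
  show ?case
  proof (cases "q mod b = b - 1")
    case False
    have b0: "b > 0" using assms by simp
    have lt: "q mod b + 1 < b" using False mod_less_divisor[OF b0, of q] by arith
    have e: "q + 1 = (q mod b + 1) + b * (q div b)" by simp
    have m: "(q+1) mod b = q mod b + 1" using lt by (subst e, subst mod_mult_self2) simp
    have d: "(q+1) div b = q div b" using lt b0 by (subst e, subst div_mult_self2) simp_all
    have t: "tau b q = 0" using False by (simp add: tau.simps)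
    show ?thesis using digsum_rec[OF assms, of "q+1"] digsum_rec[OF assms, of q] m d t by simp
  next
    case True
    have b0: "b > 0" using assms by simp
    have qq: "q = b * (q div b) + (b - 1)" using True by (metis div_mult_mod_eq mult.commute)
    then have "q + 1 = b * (q div b + 1)" using b0 by (simp add: algebra_simps)
    then have m: "(q+1) mod b = 0" and d: "(q+1) div b = q div b + 1" using b0 by simp_all
    have t: "tau b q = Suc (tau b (q div b))" using True assms by (simp add: tau.simps)
    have "q \<noteq> 0"
    proof
      assume "q = 0" then have "b - 1 = 0" using True by simp
      then show False using assms by simp
    qed
    then have lt: "q div b < q" using assms by (intro div_less_dividend) auto
    have ih: "digsum b (q div b + 1) + int (b-1) * int (tau b (q div b)) = digsum b (q div b) + 1"
      using less.IH[OF lt] .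
    have "digsum b (q+1) = digsum b (q div b + 1)" using digsum_rec[OF assms, of "q+1"] m d by simp
    moreover have "digsum b q = int (b-1) + digsum b (q div b)" using digsum_rec[OF assms, of q] True by simp
    ultimately show ?thesis using ih t by (simp add: algebra_simps)
  qed
qed

lemma dvd_tau:
  assumes "b \<ge> 2"
  shows "b ^ j dvd (q+1) \<longleftrightarrow> j \<le> tau b q"
proof (induction j arbitrary: q)
  case 0 then show ?case by simp
next
  case (Suc j)
  have b0: "b > 0" using assms by simp
  show ?case
  proof (cases "q mod b = b - 1")
    case True
    have qq: "q = b * (q div b) + (b - 1)" using True by (metis div_mult_mod_eq mult.commute)
    then have e: "q + 1 = b * (q div b + 1)" using b0 by (simp add: algebra_simps)
    have t: "tau b q = Suc (tau b (q div b))" using True assms by (simp add: tau.simps)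
    have "b ^ Suc j dvd (q+1) \<longleftrightarrow> b * b ^ j dvd b * (q div b + 1)"
      by (simp only: e power_Suc)
    also have "... \<longleftrightarrow> b ^ j dvd (q div b + 1)" using b0 by (rule nat_mult_dvd_cancel1)
    finally have "b ^ Suc j dvd (q+1) \<longleftrightarrow> b ^ j dvd (q div b + 1)" .
    then show ?thesis using Suc.IH t by simp
  next
    case False
    have t: "tau b q = 0" using False by (simp add: tau.simps)
    have "\<not> b dvd (q+1)"
    proof
      assume "b dvd (q+1)"
      then have "q mod b = b - 1" using dvd_iff_mod_pred[OF b0] by blast
      then show False using False by simp
    qed
    then have "\<not> b ^ Suc j dvd (q+1)" by (metis dvd_trans dvd_triv_left power_Suc)
    then show ?thesis using t by simp
  qed
qed

lemma mod_mult_split: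
  assumes "t < m" "a < (M::nat)"
  shows "(n mod m = t \<and> (n div m) mod M = a) \<longleftrightarrow> n mod (m * M) = t + m * a"
proof
  assume "n mod m = t \<and> n div m mod M = a"
  then show "n mod (m * M) = t + m * a" by (simp add: mod_mult2_eq)
next
  assume h: "n mod (m * M) = t + m * a"
  have e: "n mod (m * M) = m * (n div m mod M) + n mod m" by (simp add: mod_mult2_eq)
  have "n mod m = (n mod (m * M)) mod m" by (simp add: mod_mod_cancel)
  also have "... = (t + m * a) mod m" using h by simp
  also have "... = t" using assms by simp
  finally have "n mod m = t" .
  moreover have "m > 0" using assms by simp
  then have "n div m mod M = a" using h e \<open>n mod m = t\<close> by simp
  ultimately show "n mod m = t \<and> n div m mod M = a" by simp
qed

lemma card_residue_mult:
  assumes "a < (M::nat)"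
  shows "card {n. n < M * k \<and> n mod M = a} = k"
proof -
  have "{n. n < M * k \<and> n mod M = a} = (\<lambda>i. a + M * i) ` {..<k}"
  proof (rule set_eqI, rule iffI)
    fix n assume "n \<in> {n. n < M * k \<and> n mod M = a}"
    then have h: "n < M * k" "n mod M = a" by auto
    have "n = a + M * (n div M)" using h(2) by (metis mod_mult_div_eq add.commute mult.commute)
    moreover have "n div M < k" using h(1) by (metis div_less_iff_less_mult mult.commute assms less_nat_zero_code neq0_conv)
    ultimately show "n \<in> (\<lambda>i. a + M * i) ` {..<k}" by blast
  next
    fix n assume "n \<in> (\<lambda>i. a + M * i) ` {..<k}"
    then obtain i where i: "i < k" "n = a + M * i" by auto
    have "a + M * i < M + M * i" using assms by simp
    also have "... = M * (i + 1)" by simp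
    also have "... \<le> M * k" using i(1) by (intro mult_le_mono2) simp
    finally show "n \<in> {n. n < M * k \<and> n mod M = a}" using i assms by simp
  qed
  moreover have "inj_on (\<lambda>i. a + M * i) {..<k}" using assms by (intro inj_onI) simp
  ultimately show ?thesis by (simp add: card_image)
qed

lemma card_residue_bounds:
  assumes "a < (M::nat)"
  shows "N div M \<le> card {n. n < N \<and> n mod M = a}" "card {n. n < N \<and> n mod M = a} \<le> N div M + 1"
proof -
  have M0: "M > 0" using assms by simp
  have le: "M * (N div M) \<le> N" by simp
  have "{n. n < M * (N div M) \<and> n mod M = a} \<subseteq> {n. n < N \<and> n mod M = a}"
    using le by (auto intro: less_le_trans)
  then have "card {n. n < M * (N div M) \<and> n mod M = a} \<le> card {n. n < N \<and> n mod M = a}"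
    by (intro card_mono) auto
  then show "N div M \<le> card {n. n < N \<and> n mod M = a}"
    using card_residue_mult[OF assms, of "N div M"] by simp
  have f1: "N div M * M + N mod M = N" by (rule div_mult_mod_eq)
  have f2: "N mod M < M" using M0 by simp
  have f3: "M * (N div M + 1) = N div M * M + M" by (simp add: algebra_simps)
  have "N < M * (N div M + 1)" using f1 f2 f3 by linarith
  then have "{n. n < N \<and> n mod M = a} \<subseteq> {n. n < M * (N div M + 1) \<and> n mod M = a}" by auto
  then have "card {n. n < N \<and> n mod M = a} \<le> card {n. n < M * (N div M + 1) \<and> n mod M = a}"
    by (intro card_mono) auto
  then show "card {n. n < N \<and> n mod M = a} \<le> N div M + 1"
    using card_residue_mult[OF assms, of "N div M + 1"] by simp
qed

lemma density_residue:
  assumes "a < (M::nat)"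
  shows "(\<lambda>N. real (card {n. n < N \<and> n mod M = a}) / real N) \<longlonglongrightarrow> 1 / real M"
proof (rule tendsto_sandwich)
  have M0: "M > 0" using assms by simp
  have lo: "real N / real M - 1 \<le> real (N div M)" for N
  proof -
    have "real N = real M * real (N div M) + real (N mod M)"
      by (metis div_mult_mod_eq of_nat_add of_nat_mult mult.commute)
    moreover have "real (N mod M) < real M" using M0 by simp
    ultimately have "real N / real M < real (N div M) + 1" using M0
      by (simp add: divide_less_eq algebra_simps)
    then show ?thesis by simp
  qed
  have hi: "real (N div M) \<le> real N / real M" for N
  proof -
    have "real N = real M * real (N div M) + real (N mod M)"
      by (metis div_mult_mod_eq of_nat_add of_nat_mult mult.commute)
    then have "real M * real (N div M) \<le> real N" by simp
    then show ?thesis using M0 by (simp add: le_divide_eq mult.commute)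
  qed
  show "\<forall>\<^sub>F N in sequentially. (1 / real M - 1 / real N) \<le> real (card {n. n < N \<and> n mod M = a}) / real N"
  proof (rule eventually_sequentiallyI[of 1])
    fix N :: nat assume "1 \<le> N"
    then have N0: "real N > 0" by simp
    have "1 / real M - 1 / real N = (real N / real M - 1) / real N" using N0 by (simp add: field_simps)
    also have "... \<le> real (card {n. n < N \<and> n mod M = a}) / real N"
      using lo[of N] card_residue_bounds(1)[OF assms, of N] N0
      by (intro divide_right_mono) (simp_all add: le_trans)
    finally show "(1 / real M - 1 / real N) \<le> real (card {n. n < N \<and> n mod M = a}) / real N" .
  qed
  show "\<forall>\<^sub>F N in sequentially. real (card {n. n < N \<and> n mod M = a}) / real N \<le> (1 / real M + 1 / real N)"
  proof (rule eventually_sequentiallyI[of 1])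
    fix N :: nat assume "1 \<le> N"
    then have N0: "real N > 0" by simp
    have "real (card {n. n < N \<and> n mod M = a}) / real N \<le> (real N / real M + 1) / real N"
    proof (rule divide_right_mono)
      have "real (card {n. n < N \<and> n mod M = a}) \<le> real (N div M + 1)"
        using card_residue_bounds(2)[OF assms, of N] by (rule of_nat_mono)
      then show "real (card {n. n < N \<and> n mod M = a}) \<le> real N / real M + 1" using hi[of N] by simp
    qed (use N0 in simp)
    also have "... = 1 / real M + 1 / real N" using N0 by (simp add: field_simps)
    finally show "real (card {n. n < N \<and> n mod M = a}) / real N \<le> (1 / real M + 1 / real N)" .
  qed
  show "(\<lambda>N. 1 / real M - 1 / real N) \<longlonglongrightarrow> 1 / real M"
    using tendsto_diff[OF tendsto_const lim_1_over_n] by simp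
  show "(\<lambda>N. 1 / real M + 1 / real N) \<longlonglongrightarrow> 1 / real M"
    using tendsto_add[OF tendsto_const lim_1_over_n] by simp
qed




definition Yv :: "nat \<Rightarrow> nat \<Rightarrow> nat \<Rightarrow> nat \<Rightarrow> int" where
  "Yv b r m t = digsum b ((t + r) mod m) - digsum b t"

lemma delta_decomp:
  assumes b: "b \<ge> 2" and rm: "r < b ^ K"
  shows "Delta b r n = Yv b r (b^K) (n mod b^K) +
     (if n mod b^K + r \<ge> b^K then 1 - int (b-1) * int (tau b (n div b^K)) else 0)"
proof -
  let ?m = "b ^ K" let ?t = "n mod ?m" let ?q = "n div ?m"
  have m0: "?m > 0" using b by simp
  have n: "n = ?t + ?m * ?q" by simp
  have tm: "?t < ?m" using m0 by simp
  show ?thesis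
  proof (cases "?t + r \<ge> ?m")
    case False
    then have lt: "?t + r < ?m" by simp
    have e: "n + r = (?t + r) + ?m * ?q" by simp
    have "digsum b (n + r) = digsum b (?t + r) + digsum b ?q"
      by (subst e) (rule digsum_split[OF b lt])
    moreover have "digsum b n = digsum b ?t + digsum b ?q"
      using digsum_split[OF b tm, of ?q] by simp
    moreover have "(?t + r) mod ?m = ?t + r" using lt by simp
    ultimately show ?thesis using False by (simp add: Delta_def Yv_def)
  next
    case True
    have lt: "?t + r - ?m < ?m" using tm rm by linarith
    have f1: "?m * (?q + 1) = ?m * ?q + ?m" by (simp add: algebra_simps)
    have f2: "n = ?t + ?m * ?q" by simp
    have e: "n + r = (?t + r - ?m) + ?m * (?q + 1)" using True f1 f2 by linarith
    have "digsum b (n + r) = digsum b (?t + r - ?m) + digsum b (?q + 1)"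
      by (subst e) (rule digsum_split[OF b lt])
    moreover have "digsum b n = digsum b ?t + digsum b ?q"
      using digsum_split[OF b tm, of ?q] by simp
    moreover have "(?t + r) mod ?m = ?t + r - ?m"
    proof -
      have "(?t + r) = (?t + r - ?m) + ?m * 1" using True by simp
      then have "(?t + r) mod ?m = (?t + r - ?m) mod ?m" by (metis mod_mult_self2)
      then show ?thesis using lt by simp
    qed
    moreover have "digsum b (?q+1) = digsum b ?q + 1 - int (b-1) * int (tau b ?q)"
      using digsum_succ[OF b, of ?q] by linarith
    ultimately show ?thesis using True by (simp add: Delta_def Yv_def)
  qed
qed

definition gam :: "nat \<Rightarrow> int \<Rightarrow> real" where
  "gam b z = (if 0 \<le> z \<and> int (b-1) dvd z then (1 - 1 / real b) / real b ^ nat (z div int (b-1)) else 0)"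

definition wt :: "nat \<Rightarrow> nat \<Rightarrow> nat \<Rightarrow> nat \<Rightarrow> int \<Rightarrow> real" where
  "wt b r m t d = (if t + r < m then (if Yv b r m t = d then 1 else 0) else gam b (Yv b r m t + 1 - d))"

lemma density_ge_tau:
  assumes b: "b \<ge> 2" and tm: "t < m"
  shows "(\<lambda>N. real (card {n. n < N \<and> n mod m = t \<and> j \<le> tau b (n div m)}) / real N)
          \<longlonglongrightarrow> 1 / (real m * real b ^ j)"
proof -
  have bj: "b ^ j > 0" using b by simp
  have a: "b ^ j - 1 < b ^ j" using bj by simp
  have eq: "(n mod m = t \<and> j \<le> tau b (n div m)) \<longleftrightarrow> n mod (m * b ^ j) = t + m * (b ^ j - 1)" for n
  proof -
    have "j \<le> tau b (n div m) \<longleftrightarrow> (n div m) mod b ^ j = b ^ j - 1"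
      using dvd_tau[OF b, of j "n div m"] dvd_iff_mod_pred[OF bj, of "n div m"] by simp
    then show ?thesis using mod_mult_split[OF tm a, of n] by simp
  qed
  have lt: "t + m * (b ^ j - 1) < m * b ^ j"
  proof -
    obtain k where k: "b ^ j = Suc k" using bj by (metis gr0_implies_Suc)
    have "m * (b ^ j - 1) + m = m * b ^ j" unfolding k by (simp add: algebra_simps)
    then show ?thesis using tm by linarith
  qed
  have "(\<lambda>N. real (card {n. n < N \<and> n mod (m * b ^ j) = t + m * (b ^ j - 1)}) / real N)
          \<longlonglongrightarrow> 1 / real (m * b ^ j)"
    by (rule density_residue[OF lt])
  then show ?thesis using eq by simp
qed

lemma density_tau:
  assumes b: "b \<ge> 2" and tm: "t < m"
  shows "(\<lambda>N. real (card {n. n < N \<and> n mod m = t \<and> tau b (n div m) = j}) / real N)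
          \<longlonglongrightarrow> (1 - 1 / real b) / (real m * real b ^ j)"
proof -
  let ?A = "\<lambda>N. {n. n < N \<and> n mod m = t \<and> j \<le> tau b (n div m)}"
  let ?B = "\<lambda>N. {n. n < N \<and> n mod m = t \<and> Suc j \<le> tau b (n div m)}"
  have e: "{n. n < N \<and> n mod m = t \<and> tau b (n div m) = j} = ?A N - ?B N" for N by auto
  have c: "real (card {n. n < N \<and> n mod m = t \<and> tau b (n div m) = j}) / real N
      = real (card (?A N)) / real N - real (card (?B N)) / real N" for N
  proof -
    have "?B N \<subseteq> ?A N" by auto
    moreover have "finite (?A N)" by simp
    ultimately have "card (?A N - ?B N) = card (?A N) - card (?B N)" by (simp add: card_Diff_subset)
    moreover have "card (?B N) \<le> card (?A N)" using \<open>?B N \<subseteq> ?A N\<close> by (intro card_mono) auto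
    ultimately show ?thesis unfolding e by (simp add: of_nat_diff diff_divide_distrib)
  qed
  have "(\<lambda>N. real (card (?A N)) / real N - real (card (?B N)) / real N)
      \<longlonglongrightarrow> 1 / (real m * real b ^ j) - 1 / (real m * real b ^ Suc j)"
    by (intro tendsto_diff density_ge_tau[OF b tm])
  moreover have "1 / (real m * real b ^ j) - 1 / (real m * real b ^ Suc j) = (1 - 1 / real b) / (real m * real b ^ j)"
  proof -
    have "real b > 0" "real m > 0" using b tm by auto
    then show ?thesis by (simp add: field_simps)
  qed
  ultimately show ?thesis using c by simp
qed




lemma density_t:
  assumes b: "b \<ge> 2" and rm: "r < b ^ K" and tm: "t < b ^ K"
  shows "(\<lambda>N. real (card {n. n < N \<and> n mod b^K = t \<and> Delta b r n = d}) / real N)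
          \<longlonglongrightarrow> wt b r (b^K) t d / real (b ^ K)"
proof -
  let ?m = "b ^ K"
  have D: "n mod ?m = t \<Longrightarrow> Delta b r n = Yv b r ?m t +
     (if t + r \<ge> ?m then 1 - int (b-1) * int (tau b (n div ?m)) else 0)" for n
    using delta_decomp[OF b rm, of n] by simp
  have zero: "(\<lambda>N. real (card ({}::nat set)) / real N) \<longlonglongrightarrow> 0" by simp
  show ?thesis
  proof (cases "t + r < ?m")
    case True
    show ?thesis
    proof (cases "Yv b r ?m t = d")
      case True2: True
      have "{n. n < N \<and> n mod ?m = t \<and> Delta b r n = d} = {n. n < N \<and> n mod ?m = t}" for N
        using D True True2 by auto
      moreover have "wt b r ?m t d = 1" using True True2 by (simp add: wt_def)
      ultimately show ?thesis using density_residue[OF tm] by simp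
    next
      case False
      have E: "{n. n < N \<and> n mod ?m = t \<and> Delta b r n = d} = {}" for N
        using D True False by auto
      have "(\<lambda>N. real (card {n. n < N \<and> n mod ?m = t \<and> Delta b r n = d}) / real N) = (\<lambda>N. 0)"
        by (rule ext, simp only: E card.empty of_nat_0 div_0)
      moreover have "wt b r ?m t d = 0" using True False by (simp add: wt_def)
      ultimately show ?thesis by simp
    qed
  next
    case False
    let ?z = "Yv b r ?m t + 1 - d"
    have b1: "int (b-1) > 0" using b by simp
    have w: "wt b r ?m t d = gam b ?z" using False by (simp add: wt_def)
    have iff: "n mod ?m = t \<Longrightarrow> Delta b r n = d \<longleftrightarrow> int (b-1) * int (tau b (n div ?m)) = ?z" for n
      using D[of n] False by auto
    show ?thesis
    proof (cases "0 \<le> ?z \<and> int (b-1) dvd ?z")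
      case True
      define j where "j = nat (?z div int (b-1))"
      have nn: "0 \<le> ?z div int (b-1)" using True b1 by (simp add: pos_imp_zdiv_nonneg_iff)
      have "?z = int (b-1) * (?z div int (b-1))" using True by (simp only: dvd_mult_div_cancel)
      then have zj: "?z = int (b-1) * int j" using nn unfolding j_def by simp
      have "int (b-1) * int (tau b q) = ?z \<longleftrightarrow> tau b q = j" for q
        unfolding zj using b1 by (simp add: mult_cancel_left)
      then have "{n. n < N \<and> n mod ?m = t \<and> Delta b r n = d} = {n. n < N \<and> n mod ?m = t \<and> tau b (n div ?m) = j}" for N
        using iff by auto
      moreover have "gam b ?z = (1 - 1 / real b) / real b ^ j" using True unfolding gam_def j_def by simp
      moreover have "(1 - 1 / real b) / (real ?m * real b ^ j) = (1 - 1 / real b) / real b ^ j / real ?m"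
        by simp
      ultimately show ?thesis using density_tau[OF b tm, of j] w by (simp add: mult.commute)
    next
      case False2: False
      have "int (b-1) * int (tau b q) \<noteq> ?z" for q
      proof
        assume h: "int (b-1) * int (tau b q) = ?z"
        then have "0 \<le> ?z" by (metis h of_nat_0_le_iff zero_le_mult_iff)
        moreover have "int (b-1) dvd ?z" using h by (metis dvd_triv_left)
        ultimately show False using False2 by blast
      qed
      then have E: "{n. n < N \<and> n mod ?m = t \<and> Delta b r n = d} = {}" for N using iff by auto
      have "(\<lambda>N. real (card {n. n < N \<and> n mod ?m = t \<and> Delta b r n = d}) / real N) = (\<lambda>N. 0)"
        by (rule ext, simp only: E card.empty of_nat_0 div_0)
      moreover have "gam b ?z = 0" using False2 unfolding gam_def by auto
      ultimately show ?thesis using w by simp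
    qed
  qed
qed

lemma card_split_mod:
  fixes m N :: nat
  assumes "m > 0"
  shows "card {n. n < N \<and> P n} = (\<Sum>t<m. card {n. n < N \<and> n mod m = t \<and> P n})"
proof -
  have "{n. n < N \<and> P n} = (\<Union>t\<in>{..<m}. {n. n < N \<and> n mod m = t \<and> P n})"
    using assms by auto
  moreover have "card (\<Union>t\<in>{..<m}. {n. n < N \<and> n mod m = t \<and> P n}) = (\<Sum>t<m. card {n. n < N \<and> n mod m = t \<and> P n})"
    by (rule card_UN_disjoint) auto
  ultimately show ?thesis by simp
qed

lemma mu_eq:
  assumes b: "b \<ge> 2" and rm: "r < b ^ K"
  shows "mu b r d = (\<Sum>t<b^K. wt b r (b^K) t d) / real (b ^ K)"
proof -
  let ?m = "b ^ K"
  have m0: "?m > 0" using b by simp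
  have "(\<lambda>N. \<Sum>t<?m. real (card {n. n < N \<and> n mod ?m = t \<and> Delta b r n = d}) / real N)
        \<longlonglongrightarrow> (\<Sum>t<?m. wt b r ?m t d / real ?m)"
    by (intro tendsto_sum density_t[OF b rm]) simp
  moreover have "(\<Sum>t<?m. real (card {n. n < N \<and> n mod ?m = t \<and> Delta b r n = d}) / real N)
      = real (card {n. n < N \<and> Delta b r n = d}) / real N" for N
    using card_split_mod[OF m0, of N "\<lambda>n. Delta b r n = d"] by (simp add: sum_divide_distrib)
  ultimately have "(\<lambda>N. real (card {n. n < N \<and> Delta b r n = d}) / real N)
        \<longlonglongrightarrow> (\<Sum>t<?m. wt b r ?m t d) / real ?m" by (simp add: sum_divide_distrib)
  then show ?thesis unfolding mu_def by (rule limI)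
qed




lemma sums_S1:
  fixes x :: real assumes "0 < x" "x < 1"
  shows "(\<lambda>j. real j * x ^ j) sums (x / (1 - x)^2)"
proof -
  have "(\<lambda>n. real (Suc n) * x ^ n) sums (1 / (1 - x)^2)"
    using geometric_deriv_sums[of x] assms by simp
  then have "(\<lambda>n. x * (real (Suc n) * x ^ n)) sums (x * (1 / (1 - x)^2))"
    by (rule sums_mult)
  then have "(\<lambda>n. real (Suc n) * x ^ Suc n) sums (x / (1 - x)^2)"
    by (simp add: algebra_simps)
  then show ?thesis by (subst (asm) sums_Suc_iff) simp
qed

lemma summable_S2:
  fixes x :: real assumes "0 < x" "x < 1"
  shows "summable (\<lambda>j. real j ^ 2 * x ^ j)"
proof -
  let ?c = "\<lambda>n::nat. (1::real)"
  have s0: "\<And>y::real. norm y < 1 \<Longrightarrow> summable (\<lambda>n. ?c n * y ^ n)"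
    by (simp add: summable_geometric)
  have s1: "\<And>y::real. norm y < 1 \<Longrightarrow> summable (\<lambda>n. diffs ?c n * y ^ n)"
    by (rule termdiff_converges[OF _ s0])
  have "summable (\<lambda>n. diffs (diffs ?c) n * x ^ n)"
    by (rule termdiff_converges[OF _ s1]) (use assms in auto)
  then have sm: "summable (\<lambda>n. (real (Suc n) * real (Suc (Suc n))) * x ^ n)"
    by (simp add: diffs_def algebra_simps)
  show ?thesis
  proof (rule summable_comparison_test[OF _ sm])
    show "\<exists>N. \<forall>n\<ge>N. norm (real n ^ 2 * x ^ n) \<le> real (Suc n) * real (Suc (Suc n)) * x ^ n"
    proof (intro exI allI impI)
      fix n :: nat
      have "real n ^ 2 \<le> real (Suc n) * real (Suc (Suc n))" by (simp add: power2_eq_square algebra_simps)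
      then show "norm (real n ^ 2 * x ^ n) \<le> real (Suc n) * real (Suc (Suc n)) * x ^ n"
        using assms by (simp add: mult_right_mono)
    qed
  qed
qed

lemma sums_S2:
  fixes x :: real assumes x: "0 < x" "x < 1"
  shows "(\<lambda>j. real j ^ 2 * x ^ j) sums (x * (1 + x) / (1 - x)^3)"
proof -
  define S2 where "S2 = (\<Sum>j. real j ^ 2 * x ^ j)"
  have s2: "(\<lambda>j. real j ^ 2 * x ^ j) sums S2" unfolding S2_def using summable_S2[OF x] by (rule summable_sums)
  then have a: "(\<lambda>j. real (Suc j) ^ 2 * x ^ (Suc j)) sums S2" by (subst sums_Suc_iff) simp
  have s1: "(\<lambda>j. real j * x ^ j) sums (x / (1 - x)^2)" by (rule sums_S1[OF x])
  have s0: "(\<lambda>j. x ^ j) sums (1 / (1 - x))" using geometric_sums[of x] x by simp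
  have "(\<lambda>j. x * (real j ^ 2 * x ^ j + 2 * (real j * x ^ j) + x ^ j)) sums (x * (S2 + 2 * (x / (1 - x)^2) + 1 / (1 - x)))"
    by (intro sums_mult sums_add s2 s0 s1)
  moreover have "(\<lambda>j. x * (real j ^ 2 * x ^ j + 2 * (real j * x ^ j) + x ^ j)) = (\<lambda>j. real (Suc j) ^ 2 * x ^ (Suc j))"
    by (rule ext) (simp add: power2_eq_square algebra_simps)
  ultimately have "S2 = x * (S2 + 2 * (x / (1 - x)^2) + 1 / (1 - x))" using a sums_unique2 by metis
  then have "S2 * (1 - x) = x * (2 * (x / (1 - x)^2) + 1 / (1 - x))" by (simp add: algebra_simps)
  moreover have nz: "1 - x \<noteq> 0" using x by simp
  ultimately have "S2 = x * (2 * (x / (1 - x)^2) + 1 / (1 - x)) / (1 - x)" by (simp add: eq_divide_eq)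
  also have "... = x * (1 + x) / (1 - x)^3"
  proof -
    have gen: "x * (2 * (x / y^2) + 1 / y) / y = x * (2 * x + y) / y^3" if "y > 0" for y :: real
      using that by (simp add: field_simps power2_eq_square power3_eq_cube)
    have "2 * x + (1 - x) = 1 + x" by simp
    then show ?thesis using gen[of "1 - x"] x by simp
  qed
  finally show ?thesis using s2 by simp
qed




definition pj :: "nat \<Rightarrow> nat \<Rightarrow> real" where
  "pj b j = (1 - 1 / real b) / real b ^ j"

lemma pj_alt: "b \<ge> 2 \<Longrightarrow> pj b j = (1 - 1 / real b) * (1 / real b) ^ j"
proof -
  have "(1 / real b) ^ j = 1 / real b ^ j" by (simp add: power_one_over)
  then show ?thesis by (simp add: pj_def)
qed

lemma H012:
  assumes b: "b \<ge> 2"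
  shows "((\<lambda>j. pj b j) has_sum 1) UNIV"
    "((\<lambda>j. real j * pj b j) has_sum (1 / (real b - 1))) UNIV"
    "((\<lambda>j. real j ^ 2 * pj b j) has_sum ((real b + 1) / (real b - 1) ^ 2)) UNIV"
proof -
  define x where "x = 1 / real b"
  have x: "0 < x" "x < 1" using b unfolding x_def by auto
  have bx: "real b = 1 / x" using x_def b by simp
  have p: "pj b j = (1 - x) * x ^ j" for j using pj_alt[OF b] x_def by simp
  have nn: "0 \<le> (1 - x) * x ^ j" for j using x by simp
  have "(\<lambda>j. (1 - x) * x ^ j) sums ((1 - x) * (1 / (1 - x)))"
    by (intro sums_mult) (use geometric_sums[of x] x in simp)
  then have "(\<lambda>j. (1 - x) * x ^ j) sums 1" using x by simp
  then show "((\<lambda>j. pj b j) has_sum 1) UNIV" unfolding p by (rule sums_nonneg_imp_has_sum) (rule nn)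
  have "(\<lambda>j. (1 - x) * (real j * x ^ j)) sums ((1 - x) * (x / (1 - x)^2))"
    by (intro sums_mult sums_S1 x)
  moreover have "(1 - x) * (x / (1 - x)^2) = 1 / (real b - 1)"
  proof -
    have "(1 - x) * (x / (1 - x)^2) = x / (1 - x)" using x by (simp add: power2_eq_square)
    also have "... = 1 / (real b - 1)" unfolding x_def using b by (simp add: field_simps)
    finally show ?thesis .
  qed
  ultimately have "(\<lambda>j. real j * ((1 - x) * x ^ j)) sums (1 / (real b - 1))" by (simp add: algebra_simps)
  then show "((\<lambda>j. real j * pj b j) has_sum (1 / (real b - 1))) UNIV" unfolding p
    by (rule sums_nonneg_imp_has_sum) (use nn in simp)
  have "(\<lambda>j. (1 - x) * (real j ^ 2 * x ^ j)) sums ((1 - x) * (x * (1 + x) / (1 - x)^3))"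
    by (intro sums_mult sums_S2 x)
  moreover have "(1 - x) * (x * (1 + x) / (1 - x)^3) = (real b + 1) / (real b - 1) ^ 2"
  proof -
    have "(1 - x) * (x * (1 + x) / (1 - x)^3) = x * (1 + x) / (1 - x)^2" using x
      by (simp add: power2_eq_square power3_eq_cube)
    also have "... = (real b + 1) / (real b - 1) ^ 2"
    proof -
      define z where "z = real b - 1"
      have z: "z > 0" "z + 1 > 0" "z \<noteq> 0" "z + 1 \<noteq> 0" using b unfolding z_def by auto
      have bz: "real b = z + 1" unfolding z_def by simp
      have e1: "1 - 1 / (z + 1) = z / (z + 1)" using z by (simp add: field_simps)
      have e2: "1 + 1 / (z + 1) = (z + 2) / (z + 1)" using z by (simp add: field_simps)
      have e3: "1 / (z + 1) * ((z + 2) / (z + 1)) = (z + 2) / (z + 1)^2" by (simp add: power2_eq_square)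
      have e4: "(z / (z + 1))^2 = z^2 / (z + 1)^2" by (simp add: power_divide)
      have "1 / (z + 1) * (1 + 1 / (z + 1)) / (1 - 1 / (z + 1))^2 = 1 / (z + 1) * ((z + 2) / (z + 1)) / (z / (z + 1))^2"
        by (simp only: e1 e2)
      also have "... = ((z + 2) / (z + 1)^2) / (z^2 / (z + 1)^2)" by (simp only: e3 e4)
      also have "... = (z + 2) / z^2" using z by simp
      finally have "1 / (z + 1) * (1 + 1 / (z + 1)) / (1 - 1 / (z + 1))^2 = (z + 2) / z ^ 2" .
      then show ?thesis unfolding x_def bz by (simp add: add.commute)
    qed
    finally show ?thesis .
  qed
  ultimately have "(\<lambda>j. real j ^ 2 * ((1 - x) * x ^ j)) sums ((real b + 1) / (real b - 1) ^ 2)" by (simp add: algebra_simps)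
  then show "((\<lambda>j. real j ^ 2 * pj b j) has_sum ((real b + 1) / (real b - 1) ^ 2)) UNIV" unfolding p
    by (rule sums_nonneg_imp_has_sum) (use nn in simp)
qed

lemma reindex_gam:
  assumes b: "b \<ge> 2"
    and h: "((\<lambda>j. F (c - int (b-1) * int j) * pj b j) has_sum s) UNIV"
  shows "((\<lambda>d. F d * gam b (c - d)) has_sum s) UNIV"
proof -
  let ?h = "\<lambda>j::nat. c - int (b-1) * int j"
  have b1: "int (b-1) > 0" using b by simp
  have inj: "inj_on ?h UNIV" using b1 by (intro inj_onI) simp
  have g: "gam b (c - ?h j) = pj b j" for j
    using b1 by (simp add: gam_def pj_def)
  have "((\<lambda>d. F d * gam b (c - d)) \<circ> ?h) = (\<lambda>j. F (c - int (b-1) * int j) * pj b j)"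
    using g by (simp add: comp_def)
  then have "((\<lambda>d. F d * gam b (c - d)) has_sum s) (range ?h)"
    using has_sum_reindex[OF inj, of "\<lambda>d. F d * gam b (c - d)" s] h by simp
  moreover have zero: "F d * gam b (c - d) = 0" if "d \<notin> range ?h" for d
  proof -
    have "gam b (c - d) = 0"
    proof (rule ccontr)
      assume "gam b (c - d) \<noteq> 0"
      then have z: "0 \<le> c - d" "int (b-1) dvd (c - d)" unfolding gam_def by (auto split: if_splits)
      then obtain k where k: "c - d = int (b-1) * k" by (auto elim: dvdE)
      have "k \<ge> 0" using z(1) k b1 by (simp add: zero_le_mult_iff)
      then have "d = ?h (nat k)" using k by simp
      then show False using that by blast
    qed
    then show ?thesis by simp
  qed
  moreover have "((\<lambda>d. F d * gam b (c - d)) has_sum s) (range ?h) \<longleftrightarrow> ((\<lambda>d. F d * gam b (c - d)) has_sum s) UNIV"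
    by (rule has_sum_cong_neutral) (use zero in auto)
  ultimately show ?thesis by blast
qed

lemma G1:
  assumes b: "b \<ge> 2"
  shows "((\<lambda>d. real_of_int d * gam b (c - d)) has_sum (real_of_int c - 1)) UNIV"
proof (rule reindex_gam[OF b])
  have b1: "real b - 1 > 0" using b by simp
  have "((\<lambda>j. real_of_int c * pj b j + (- (real b - 1)) * (real j * pj b j)) has_sum
        (real_of_int c * 1 + (- (real b - 1)) * (1 / (real b - 1)))) UNIV"
    by (intro has_sum_add has_sum_cmult_right H012[OF b])
  moreover have Veq: "real_of_int c * 1 + (- (real b - 1)) * (1 / (real b - 1)) = real_of_int c - 1"
  proof -
    have nz: "real b - 1 \<noteq> 0" using b1 by simp
    have "(real b - 1) * (1 / (real b - 1)) = 1" using nz by simp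
    then have "(- (real b - 1)) * (1 / (real b - 1)) = -1" by (simp only: mult_minus_left)
    then show ?thesis by simp
  qed
  ultimately have hs: "((\<lambda>j. real_of_int c * pj b j + (- (real b - 1)) * (real j * pj b j)) has_sum
        (real_of_int c - 1)) UNIV" by (simp only: Veq)
  have eqj: "real_of_int (c - int (b-1) * int j) * pj b j = real_of_int c * pj b j + (- (real b - 1)) * (real j * pj b j)" for j
    using b by (simp add: of_nat_diff algebra_simps)
  show "((\<lambda>j. real_of_int (c - int (b-1) * int j) * pj b j) has_sum (real_of_int c - 1)) UNIV"
    using hs by (subst has_sum_cong[OF eqj]) simp
qed

lemma G2:
  assumes b: "b \<ge> 2"
  shows "((\<lambda>d. (real_of_int d)^2 * gam b (c - d)) has_sum ((real_of_int c)^2 - 2 * real_of_int c + real b + 1)) UNIV"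
proof (rule reindex_gam[OF b])
  have b1: "real b - 1 > 0" using b by simp
  have "((\<lambda>j. (real_of_int c)^2 * pj b j + (- 2 * real_of_int c * (real b - 1)) * (real j * pj b j)
         + (real b - 1)^2 * (real j ^ 2 * pj b j)) has_sum
        ((real_of_int c)^2 * 1 + (- 2 * real_of_int c * (real b - 1)) * (1 / (real b - 1))
         + (real b - 1)^2 * ((real b + 1) / (real b - 1) ^ 2))) UNIV"
    by (intro has_sum_add has_sum_cmult_right H012[OF b])
  moreover have Veq: "(real_of_int c)^2 * 1 + (- 2 * real_of_int c * (real b - 1)) * (1 / (real b - 1))
         + (real b - 1)^2 * ((real b + 1) / (real b - 1) ^ 2) = (real_of_int c)^2 - 2 * real_of_int c + real b + 1"
  proof -
    have "(- 2 * real_of_int c * (real b - 1)) * (1 / (real b - 1)) = - 2 * real_of_int c" using b1 by simp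
    moreover have "(real b - 1)^2 * ((real b + 1) / (real b - 1) ^ 2) = real b + 1" using b1 by simp
    ultimately show ?thesis by simp
  qed
  ultimately have hs: "((\<lambda>j. (real_of_int c)^2 * pj b j + (- 2 * real_of_int c * (real b - 1)) * (real j * pj b j)
         + (real b - 1)^2 * (real j ^ 2 * pj b j)) has_sum ((real_of_int c)^2 - 2 * real_of_int c + real b + 1)) UNIV"
    by (simp only: Veq)
  have eqj: "(real_of_int (c - int (b-1) * int j))^2 * pj b j = (real_of_int c)^2 * pj b j + (- 2 * real_of_int c * (real b - 1)) * (real j * pj b j)
         + (real b - 1)^2 * (real j ^ 2 * pj b j)" for j
    using b by (simp add: of_nat_diff power2_eq_square algebra_simps)
  show "((\<lambda>j. (real_of_int (c - int (b-1) * int j))^2 * pj b j) has_sum ((real_of_int c)^2 - 2 * real_of_int c + real b + 1)) UNIV"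
    using hs by (subst has_sum_cong[OF eqj]) simp
qed

lemma point_has_sum:
  "((\<lambda>d::int. F d * (if Y = d then 1 else 0)) has_sum (F Y :: real)) UNIV"
  by (rule has_sum_finite_neutralI[of "{Y}"]) auto

lemma W1:
  assumes b: "b \<ge> 2"
  shows "((\<lambda>d. real_of_int d * wt b r m t d) has_sum real_of_int (Yv b r m t)) UNIV"
proof (cases "t + r < m")
  case True
  then show ?thesis unfolding wt_def using point_has_sum[of real_of_int "Yv b r m t"] by simp
next
  case False
  then show ?thesis unfolding wt_def using G1[OF b, of "Yv b r m t + 1"] by simp
qed

lemma W2:
  assumes b: "b \<ge> 2"
  shows "((\<lambda>d. (real_of_int d)^2 * wt b r m t d) has_sum
     ((real_of_int (Yv b r m t))^2 + (if t + r < m then 0 else real b))) UNIV"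
proof (cases "t + r < m")
  case True
  then show ?thesis unfolding wt_def using point_has_sum[of "\<lambda>d. (real_of_int d)^2" "Yv b r m t"] by simp
next
  case False
  have e: "(real_of_int (Yv b r m t + 1))^2 - 2 * real_of_int (Yv b r m t + 1) + real b + 1
      = (real_of_int (Yv b r m t))^2 + real b" by (simp add: power2_eq_square algebra_simps)
  have "((\<lambda>d. (real_of_int d)^2 * gam b (Yv b r m t + 1 - d)) has_sum ((real_of_int (Yv b r m t))^2 + real b)) UNIV"
    using G2[OF b, of "Yv b r m t + 1"] by (simp only: e)
  then show ?thesis unfolding wt_def using False by simp
qed




lemma has_sum_sum_fun:
  fixes f :: "'i \<Rightarrow> 'a \<Rightarrow> real"
  assumes "finite I" "\<And>i. i \<in> I \<Longrightarrow> (f i has_sum s i) A"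
  shows "((\<lambda>x. \<Sum>i\<in>I. f i x) has_sum (\<Sum>i\<in>I. s i)) A"
  using assms
proof (induction I rule: finite_induct)
  case empty then show ?case by simp
next
  case (insert i I)
  then have "((\<lambda>x. f i x + (\<Sum>i\<in>I. f i x)) has_sum (s i + (\<Sum>i\<in>I. s i))) A"
    by (intro has_sum_add) auto
  then show ?case using insert by simp
qed

lemma r_lt: "b \<ge> 2 \<Longrightarrow> r < b ^ r"
proof -
  assume b: "b \<ge> 2"
  have "r < 2 ^ r" by (rule less_exp)
  also have "(2::nat) ^ r \<le> b ^ r" using b by (intro power_mono) auto
  finally show ?thesis .
qed

lemma variance_formula:
  assumes b: "b \<ge> 2" and rm: "r < b ^ K"
  shows "variance_int (mu b r) =
    (\<Sum>t<b^K. (real_of_int (Yv b r (b^K) t))^2 + (if t + r < b^K then 0 else real b)) / real (b^K)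
    - ((\<Sum>t<b^K. real_of_int (Yv b r (b^K) t)) / real (b^K))^2"
proof -
  let ?m = "b ^ K"
  have mu: "mu b r = (\<lambda>d. (\<Sum>t<?m. wt b r ?m t d) / real ?m)"
    using mu_eq[OF b rm] by (intro ext) simp
  have h2: "((\<lambda>d. (1 / real ?m) * (\<Sum>t<?m. (real_of_int d)^2 * wt b r ?m t d)) has_sum
     ((1 / real ?m) * (\<Sum>t<?m. (real_of_int (Yv b r ?m t))^2 + (if t + r < ?m then 0 else real b)))) UNIV"
    by (intro has_sum_cmult_right has_sum_sum_fun W2[OF b]) simp_all
  have h1: "((\<lambda>d. (1 / real ?m) * (\<Sum>t<?m. real_of_int d * wt b r ?m t d)) has_sum
     ((1 / real ?m) * (\<Sum>t<?m. real_of_int (Yv b r ?m t)))) UNIV"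
    by (intro has_sum_cmult_right has_sum_sum_fun W1[OF b]) simp_all
  have e2: "(\<lambda>d. (real_of_int d)^2 * mu b r d) = (\<lambda>d. (1 / real ?m) * (\<Sum>t<?m. (real_of_int d)^2 * wt b r ?m t d))"
    unfolding mu by (simp add: sum_distrib_left sum_divide_distrib)
  have e1: "(\<lambda>d. real_of_int d * mu b r d) = (\<lambda>d. (1 / real ?m) * (\<Sum>t<?m. real_of_int d * wt b r ?m t d))"
    unfolding mu by (simp add: sum_distrib_left sum_divide_distrib)
  have "infsum (\<lambda>d. (real_of_int d)^2 * mu b r d) UNIV = (1 / real ?m) * (\<Sum>t<?m. (real_of_int (Yv b r ?m t))^2 + (if t + r < ?m then 0 else real b))"
    unfolding e2 by (rule infsumI[OF h2])
  moreover have "infsum (\<lambda>d. real_of_int d * mu b r d) UNIV = (1 / real ?m) * (\<Sum>t<?m. real_of_int (Yv b r ?m t))"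
    unfolding e1 by (rule infsumI[OF h1])
  ultimately show ?thesis unfolding variance_int_def by simp
qed




lemma Yv_top:
  assumes b: "b \<ge> 2" and t0: "t0 < b ^ K" and a: "a < b"
  shows "Yv b r (b ^ Suc K) (t0 + b ^ K * a) = Yv b r (b ^ K) t0
     + int ((a + digit b r K + (t0 + r mod b ^ K) div b ^ K) mod b) - int a"
proof -
  define M where "M = b ^ K"
  define \<rho> where "\<rho> = r mod M"
  define e where "e = digit b r K"
  define c where "c = (t0 + \<rho>) div M"
  have M0: "M > 0" using b unfolding M_def by simp
  have bS: "b ^ Suc K = M * b" unfolding M_def by (simp add: mult.commute)
  have re: "r mod (M * b) = M * e + \<rho>" unfolding e_def \<rho>_def digit_def M_def by (simp add: mod_mult2_eq)
  define u where "u = (t0 + \<rho>) + M * (a + e)"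
  have "(t0 + M * a + r) mod (M * b) = (t0 + M * a + r mod (M * b)) mod (M * b)" by (simp add: mod_add_right_eq)
  also have "t0 + M * a + r mod (M * b) = u" unfolding re u_def by (simp add: algebra_simps)
  finally have tr: "(t0 + M * a + r) mod (M * b) = u mod (M * b)" .
  have "u mod (M * b) = M * (u div M mod b) + u mod M" by (simp add: mod_mult2_eq)
  moreover have "u mod M = (t0 + \<rho>) mod M" unfolding u_def by simp
  moreover have "u div M = c + (a + e)" unfolding u_def c_def using M0 by simp
  ultimately have "u mod (M * b) = (t0 + \<rho>) mod M + M * ((a + e + c) mod b)"
    by (simp add: add.commute add.left_commute)
  moreover have "(t0 + \<rho>) mod M = (t0 + r) mod M" unfolding \<rho>_def by (simp add: mod_add_right_eq)
  ultimately have tr2: "(t0 + M * a + r) mod (M * b) = (t0 + r) mod M + M * ((a + e + c) mod b)"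
    using tr by simp
  have lt: "(t0 + r) mod M < b ^ K" using M0 unfolding M_def by simp
  have ds0: "digsum b ((t0 + r) mod M + M * ((a + e + c) mod b)) = digsum b ((t0 + r) mod M) + digsum b ((a + e + c) mod b)"
    unfolding M_def by (rule digsum_split[OF b lt[unfolded M_def]])
  have "(a + e + c) mod b < b" using b by simp
  then have ds00: "digsum b ((a + e + c) mod b) = int ((a + e + c) mod b)" by (rule digsum_small[OF b])
  have ds1: "digsum b ((t0 + M * a + r) mod (M * b)) = digsum b ((t0 + r) mod M) + int ((a + e + c) mod b)"
    by (simp only: tr2 ds0 ds00)
  have ds2: "digsum b (t0 + M * a) = digsum b t0 + int a"
    using digsum_split[OF b t0, of a] digsum_small[OF b a] unfolding M_def by simp
  show ?thesis unfolding Yv_def bS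
    using ds1 ds2 unfolding M_def e_def c_def \<rho>_def by (simp add: algebra_simps)
qed

lemma sum_split_top:
  fixes f :: "nat \<Rightarrow> 'a::comm_monoid_add"
  shows "(\<Sum>t<b ^ Suc K. f t) = (\<Sum>t0<b ^ K. \<Sum>a<b. f (t0 + b ^ K * a))"
proof -
  have "(\<Sum>t<b ^ Suc K. f t) = (\<Sum>t<b * b ^ K. f t)" by simp
  also have "... = (\<Sum>a<b. \<Sum>t\<in>{a * b ^ K..<a * b ^ K + b ^ K}. f t)"
    by (rule sum.nat_group[symmetric])
  also have "... = (\<Sum>a<b. \<Sum>t0<b ^ K. f (t0 + b ^ K * a))"
  proof (rule sum.cong[OF refl])
    fix a
    have "(\<Sum>t\<in>{0 + a * b ^ K..<b ^ K + a * b ^ K}. f t) = (\<Sum>t0\<in>{0..<b ^ K}. f (t0 + a * b ^ K))"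
      by (rule sum.shift_bounds_nat_ivl)
    then show "(\<Sum>t\<in>{a * b ^ K..<a * b ^ K + b ^ K}. f t) = (\<Sum>t0<b ^ K. f (t0 + b ^ K * a))"
      by (simp add: add.commute mult.commute atLeast0LessThan)
  qed
  also have "... = (\<Sum>t0<b ^ K. \<Sum>a<b. f (t0 + b ^ K * a))" by (rule sum.swap)
  finally show ?thesis .
qed

lemma inner_sums:
  assumes b0: "(b::nat) > 0" and w: "w \<le> b"
  shows "(\<Sum>a<b. int ((a + w) mod b) - int a) = 0"
    "(\<Sum>a<b. (int ((a + w) mod b) - int a)^2) = int w * (int b - int w) * int b"
proof -
  have sp: "(\<Sum>a<b. g a) = (\<Sum>a\<in>{0..<b-w}. g a) + (\<Sum>a\<in>{b-w..<b}. g a)" for g :: "nat \<Rightarrow> int"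
    using sum.atLeastLessThan_concat[of 0 "b-w" b g] by (simp add: atLeast0LessThan)
  have lo: "int ((a + w) mod b) - int a = int w" if "a \<in> {0..<b-w}" for a
  proof -
    have "a + w < b" using that by auto
    then show ?thesis by simp
  qed
  have hi: "int ((a + w) mod b) - int a = int w - int b" if "a \<in> {b-w..<b}" for a
  proof -
    have h: "b \<le> a + w" "a + w - b < b" using that w by auto
    have "(a + w) mod b = (a + w - b) mod b" using h(1) by (simp add: le_mod_geq)
    also have "... = a + w - b" using h(2) by simp
    finally show ?thesis using h(1) by simp
  qed
  have c1: "card {0..<b-w} = b - w" "card {b-w..<b} = w" using w by auto
  have "(\<Sum>a\<in>{0..<b-w}. int ((a + w) mod b) - int a) = (\<Sum>a\<in>{0..<b-w}. int w)"
    by (rule sum.cong) (simp_all add: lo)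
  then have "(\<Sum>a\<in>{0..<b-w}. int ((a + w) mod b) - int a) = int (b - w) * int w"
    using c1 by simp
  moreover have "(\<Sum>a\<in>{b-w..<b}. int ((a + w) mod b) - int a) = (\<Sum>a\<in>{b-w..<b}. int w - int b)"
    by (rule sum.cong) (simp_all only: hi)
  then have "(\<Sum>a\<in>{b-w..<b}. int ((a + w) mod b) - int a) = int w * (int w - int b)"
    using c1 by simp
  ultimately show "(\<Sum>a<b. int ((a + w) mod b) - int a) = 0" using sp w by (simp add: of_nat_diff algebra_simps)
  have "(\<Sum>a\<in>{0..<b-w}. (int ((a + w) mod b) - int a)^2) = (\<Sum>a\<in>{0..<b-w}. (int w)^2)"
    by (rule sum.cong) (simp_all only: lo)
  then have "(\<Sum>a\<in>{0..<b-w}. (int ((a + w) mod b) - int a)^2) = int (b - w) * (int w)^2"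
    using c1 by simp
  moreover have "(\<Sum>a\<in>{b-w..<b}. (int ((a + w) mod b) - int a)^2) = (\<Sum>a\<in>{b-w..<b}. (int w - int b)^2)"
    by (rule sum.cong) (simp_all only: hi)
  then have "(\<Sum>a\<in>{b-w..<b}. (int ((a + w) mod b) - int a)^2) = int w * (int w - int b)^2"
    using c1 by simp
  ultimately show "(\<Sum>a<b. (int ((a + w) mod b) - int a)^2) = int w * (int b - int w) * int b"
    using sp w by (simp add: of_nat_diff power2_eq_square algebra_simps)
qed




definition Ssum1 :: "nat \<Rightarrow> nat \<Rightarrow> nat \<Rightarrow> int" where
  "Ssum1 b r K = (\<Sum>t<b^K. Yv b r (b^K) t)"
definition Ssum2 :: "nat \<Rightarrow> nat \<Rightarrow> nat \<Rightarrow> int" where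
  "Ssum2 b r K = (\<Sum>t<b^K. (Yv b r (b^K) t)^2)"
definition wK :: "nat \<Rightarrow> nat \<Rightarrow> nat \<Rightarrow> nat \<Rightarrow> nat" where
  "wK b r K t0 = digit b r K + (t0 + r mod b ^ K) div b ^ K"

lemma wK_le:
  assumes b: "b \<ge> 2" and t0: "t0 < b ^ K"
  shows "wK b r K t0 \<le> b"
proof -
  have M0: "b ^ K > 0" using b by simp
  have "digit b r K < b" unfolding digit_def using b by simp
  moreover have "t0 + r mod b ^ K < b ^ K * 2" using t0 mod_less_divisor[OF M0, of r] by linarith
  then have "(t0 + r mod b ^ K) div b ^ K < 2" by (intro less_mult_imp_div_less) (simp add: mult.commute)
  ultimately show ?thesis unfolding wK_def by linarith
qed

lemma Yv_top':
  assumes b: "b \<ge> 2" and t0: "t0 < b ^ K" and a: "a < b"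
  shows "Yv b r (b * b ^ K) (t0 + b ^ K * a) = Yv b r (b ^ K) t0 + (int ((a + wK b r K t0) mod b) - int a)"
  using Yv_top[OF b t0 a, of r] unfolding wK_def by (simp add: add.assoc)

lemma S_rec:
  assumes b: "b \<ge> 2"
  shows "Ssum1 b r (Suc K) = int b * Ssum1 b r K"
    "Ssum2 b r (Suc K) = int b * Ssum2 b r K + int b * (\<Sum>t0<b^K. int (wK b r K t0) * (int b - int (wK b r K t0)))"
proof -
  have b0: "b > 0" using b by simp
  let ?Y = "\<lambda>t0. Yv b r (b ^ K) t0"
  let ?D = "\<lambda>t0 a. int ((a + wK b r K t0) mod b) - int a"
  have i1: "(\<Sum>a<b. ?Y t0 + ?D t0 a) = int b * ?Y t0" if "t0 < b ^ K" for t0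
  proof -
    have "(\<Sum>a<b. ?Y t0 + ?D t0 a) = int b * ?Y t0 + (\<Sum>a<b. ?D t0 a)" by (simp add: sum.distrib)
    also have "(\<Sum>a<b. ?D t0 a) = 0" using inner_sums(1)[OF b0 wK_le[OF b that]] by (simp add: add.commute)
    finally show ?thesis by simp
  qed
  have i2: "(\<Sum>a<b. (?Y t0 + ?D t0 a)^2) = int b * (?Y t0)^2
      + int b * (int (wK b r K t0) * (int b - int (wK b r K t0)))" if "t0 < b ^ K" for t0
  proof -
    have "(\<Sum>a<b. (?Y t0 + ?D t0 a)^2) = (\<Sum>a<b. (?Y t0)^2 + 2 * ?Y t0 * ?D t0 a + (?D t0 a)^2)"
      by (simp add: power2_eq_square algebra_simps)
    also have "... = int b * (?Y t0)^2 + 2 * ?Y t0 * (\<Sum>a<b. ?D t0 a) + (\<Sum>a<b. (?D t0 a)^2)"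
      by (simp add: sum.distrib sum_distrib_left)
    also have "(\<Sum>a<b. ?D t0 a) = 0" using inner_sums(1)[OF b0 wK_le[OF b that]] by (simp add: add.commute)
    also have "(\<Sum>a<b. (?D t0 a)^2) = int (wK b r K t0) * (int b - int (wK b r K t0)) * int b"
      using inner_sums(2)[OF b0 wK_le[OF b that]] by (simp add: add.commute)
    finally show ?thesis by (simp add: algebra_simps)
  qed
  have "Ssum1 b r (Suc K) = (\<Sum>t0<b ^ K. \<Sum>a<b. Yv b r (b ^ Suc K) (t0 + b ^ K * a))"
    unfolding Ssum1_def by (rule sum_split_top)
  also have "... = (\<Sum>t0<b ^ K. \<Sum>a<b. ?Y t0 + ?D t0 a)"
    by (intro sum.cong refl) (simp add: Yv_top'[OF b])
  also have "... = (\<Sum>t0<b ^ K. int b * ?Y t0)" by (intro sum.cong refl) (simp add: i1)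
  finally show "Ssum1 b r (Suc K) = int b * Ssum1 b r K" unfolding Ssum1_def by (simp add: sum_distrib_left)
  have "Ssum2 b r (Suc K) = (\<Sum>t0<b ^ K. \<Sum>a<b. (Yv b r (b ^ Suc K) (t0 + b ^ K * a))^2)"
    unfolding Ssum2_def by (rule sum_split_top)
  also have "... = (\<Sum>t0<b ^ K. \<Sum>a<b. (?Y t0 + ?D t0 a)^2)"
    by (intro sum.cong refl) (simp add: Yv_top'[OF b])
  also have "... = (\<Sum>t0<b ^ K. int b * (?Y t0)^2 + int b * (int (wK b r K t0) * (int b - int (wK b r K t0))))"
    by (intro sum.cong refl) (simp add: i2)
  finally show "Ssum2 b r (Suc K) = int b * Ssum2 b r K + int b * (\<Sum>t0<b^K. int (wK b r K t0) * (int b - int (wK b r K t0)))"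
    unfolding Ssum2_def by (simp add: sum.distrib sum_distrib_left)
qed

lemma Ssum1_zero:
  assumes b: "b \<ge> 2"
  shows "Ssum1 b r K = 0"
proof (induction K)
  case 0 then show ?case by (simp add: Ssum1_def Yv_def)
next
  case (Suc K) then show ?case using S_rec(1)[OF b] by simp
qed

lemma Ssum2_0: "Ssum2 b r 0 = 0" by (simp add: Ssum2_def Yv_def)




definition Tsum :: "nat \<Rightarrow> nat \<Rightarrow> nat \<Rightarrow> int" where
  "Tsum b r K = (\<Sum>t0<b^K. int (wK b r K t0) * (int b - int (wK b r K t0)))"

lemma term_nonneg:
  assumes b: "b \<ge> 2" and t0: "t0 < b ^ K"
  shows "0 \<le> int (wK b r K t0) * (int b - int (wK b r K t0))"
  using wK_le[OF b t0, of r] by simp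

lemma T_nonneg: "b \<ge> 2 \<Longrightarrow> 0 \<le> Tsum b r K"
  unfolding Tsum_def by (intro sum_nonneg term_nonneg) auto

lemma carry_le1:
  fixes b K t0 r :: nat
  assumes b: "b \<ge> 2" and t0: "t0 < b ^ K"
  shows "(t0 + r mod b ^ K) div b ^ K \<le> 1"
proof -
  have M0: "b ^ K > 0" using b by simp
  have "t0 + r mod b ^ K < b ^ K * 2" using t0 mod_less_divisor[OF M0, of r] by linarith
  then have "(t0 + r mod b ^ K) div b ^ K < 2" by (intro less_mult_imp_div_less) (simp add: mult.commute)
  then show ?thesis by simp
qed

lemma T_mid:
  assumes b: "b \<ge> 2" and e: "1 \<le> digit b r K" "digit b r K \<le> b - 2"
  shows "int (b ^ K) * (int b - 1) \<le> Tsum b r K"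
proof -
  have "int b - 1 \<le> int (wK b r K t0) * (int b - int (wK b r K t0))" if "t0 < b ^ K" for t0
  proof -
    have c: "(t0 + r mod b ^ K) div b ^ K \<le> 1" by (rule carry_le1[OF b that])
    then have w1: "1 \<le> wK b r K t0" "wK b r K t0 \<le> b - 1" using e b unfolding wK_def by auto
    have "0 \<le> (int (wK b r K t0) - 1) * (int b - 1 - int (wK b r K t0))"
      using w1 b by (intro mult_nonneg_nonneg) auto
    then show ?thesis by (simp add: algebra_simps)
  qed
  then have "of_nat (card {..<b^K}) * (int b - 1) \<le> Tsum b r K"
    unfolding Tsum_def by (intro sum_bounded_below) auto
  then show ?thesis by (simp add: mult.commute)
qed

lemma T_top:
  assumes b: "b \<ge> 2" and e: "digit b r K = b - 1"
  shows "(int b - 1) * int (b ^ K - r mod b ^ K) \<le> Tsum b r K"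
proof -
  let ?f = "\<lambda>t0. int (wK b r K t0) * (int b - int (wK b r K t0))"
  have M0: "b ^ K > 0" using b by simp
  have "(\<Sum>t0<b ^ K - r mod b ^ K. ?f t0) \<le> (\<Sum>t0<b ^ K. ?f t0)"
    by (rule sum_mono2) (auto intro: term_nonneg[OF b])
  moreover have "?f t0 = int b - 1" if "t0 < b ^ K - r mod b ^ K" for t0
  proof -
    have "t0 + r mod b ^ K < b ^ K" using that by simp
    then have "wK b r K t0 = b - 1" unfolding wK_def using e by simp
    then show ?thesis using b by (simp add: of_nat_diff)
  qed
  then have "(\<Sum>t0<b ^ K - r mod b ^ K. ?f t0) = int (b ^ K - r mod b ^ K) * (int b - 1)" by simp
  ultimately show ?thesis unfolding Tsum_def by (simp add: mult.commute)
qed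

lemma rho_small:
  assumes b: "b \<ge> 2" and d: "digit b r k = 0"
  shows "r mod b ^ Suc k < b ^ k"
proof -
  have "r mod (b ^ k * b) = b ^ k * (r div b ^ k mod b) + r mod b ^ k" by (rule mod_mult2_eq)
  then have "r mod b ^ Suc k = r mod b ^ k" using d unfolding digit_def by (simp add: mult.commute)
  then show ?thesis using b by simp
qed

definition Sset :: "nat \<Rightarrow> nat \<Rightarrow> nat set" where
  "Sset b r = {k. digit b r k \<noteq> 0 \<and> (k = 0 \<or> digit b r k \<noteq> b - 1 \<or> digit b r (k - 1) \<noteq> b - 1)}"

definition bon :: "nat \<Rightarrow> nat \<Rightarrow> nat \<Rightarrow> real" where
  "bon b r K = (case K of 0 \<Rightarrow> 0 | Suc k \<Rightarrow> (if 1 \<le> digit b r k \<and> digit b r k \<le> b - 2 then 1 else 0))"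

lemma card_Suc:
  "card (Sset b r \<inter> {..<Suc K}) = card (Sset b r \<inter> {..<K}) + (if K \<in> Sset b r then 1 else 0)"
proof -
  have "Sset b r \<inter> {..<Suc K} = (if K \<in> Sset b r then insert K (Sset b r \<inter> {..<K}) else Sset b r \<inter> {..<K})"
    by (auto simp: lessThan_Suc)
  then show ?thesis by (simp add: card_insert_if)
qed

lemma V_rec:
  assumes b: "b \<ge> 2"
  shows "real_of_int (Ssum2 b r (Suc K)) / real b ^ Suc K
     = real_of_int (Ssum2 b r K) / real b ^ K + real_of_int (Tsum b r K) / real b ^ K"
proof -
  have "real_of_int (Ssum2 b r (Suc K)) = real b * real_of_int (Ssum2 b r K) + real b * real_of_int (Tsum b r K)"
    using S_rec(2)[OF b, of r K] unfolding Tsum_def by simp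
  moreover have "real b > 0" using b by simp
  ultimately show ?thesis by (simp add: field_simps)
qed

lemma main_bound:
  assumes b: "b \<ge> 2"
  shows "real b / 4 * (real (card (Sset b r \<inter> {..<K})) + bon b r K) \<le> real_of_int (Ssum2 b r K) / real b ^ K"
proof (induction K)
  case 0 then show ?case by (simp add: Ssum2_0 bon_def)
next
  case (Suc K)
  define V where "V = real_of_int (Ssum2 b r K) / real b ^ K"
  define G where "G = real_of_int (Tsum b r K) / real b ^ K"
  define c where "c = real (card (Sset b r \<inter> {..<K}))"
  define e where "e = digit b r K"
  define B where "B = real b / 4"
  define s where "s = (if K \<in> Sset b r then 1 else (0::real))"
  have bK: "real b ^ K > 0" using b by simp
  have Bv: "B = real b / 4" unfolding B_def ..
  have bon0: "0 \<le> bon b r K" by (simp add: bon_def split: nat.splits)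
  have B0: "0 \<le> B * bon b r K" unfolding B_def using bon0 by simp
  have IH: "B * c + B * bon b r K \<le> V" using Suc.IH unfolding V_def c_def B_def by (simp add: distrib_left)
  have G0: "0 \<le> G" unfolding G_def using T_nonneg[OF b, of r K] bK by simp
  have rec: "real_of_int (Ssum2 b r (Suc K)) / real b ^ Suc K = V + G" unfolding V_def G_def by (rule V_rec[OF b])
  have lhs: "real b / 4 * (real (card (Sset b r \<inter> {..<Suc K})) + bon b r (Suc K)) = B * c + B * s + B * bon b r (Suc K)"
    unfolding c_def s_def B_def by (simp add: card_Suc distrib_left)
  have red: "B * s + B * bon b r (Suc K) \<le> G + B * bon b r K \<Longrightarrow> ?case"
    unfolding rec lhs using IH by linarith
  have bonS: "bon b r (Suc K) = (if 1 \<le> e \<and> e \<le> b - 2 then 1 else 0)" unfolding bon_def e_def by simp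
  have elt: "e < b" unfolding e_def digit_def using b by simp
  have rb: "real b \<ge> 2" using b by simp
  consider "e = 0" | "1 \<le> e \<and> e \<le> b - 2" | "e = b - 1" using elt by linarith
  then show ?case
  proof cases
    case 1
    then have "K \<notin> Sset b r" unfolding Sset_def e_def by simp
    then have "s = 0" unfolding s_def by simp
    moreover have "bon b r (Suc K) = 0" using bonS 1 by simp
    ultimately have "B * s + B * bon b r (Suc K) = 0" by simp
    then show ?thesis using G0 B0 by (intro red) linarith
  next
    case 2
    then have "K \<in> Sset b r" unfolding Sset_def e_def using b by auto
    then have "s = 1" unfolding s_def by simp
    moreover have "bon b r (Suc K) = 1" using bonS 2 by simp
    moreover have "real b - 1 \<le> G"
    proof -
      have "int (b ^ K) * (int b - 1) \<le> Tsum b r K" using T_mid[OF b] 2 unfolding e_def by auto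
      then have "real_of_int (int (b ^ K) * (int b - 1)) \<le> real_of_int (Tsum b r K)" by (simp only: of_int_le_iff)
      then have "real b ^ K * (real b - 1) \<le> real_of_int (Tsum b r K)" by simp
      then show ?thesis unfolding G_def using bK by (simp add: field_simps)
    qed
    ultimately have "B * s + B * bon b r (Suc K) = 2 * B" "real b - 1 \<le> G" by simp_all
    then show ?thesis using B0 rb Bv by (intro red) linarith
  next
    case 3
    have "\<not> (1 \<le> e \<and> e \<le> b - 2)" using 3 b by arith
    then have bon1: "bon b r (Suc K) = 0" using bonS by simp
    show ?thesis
    proof (cases "K \<in> Sset b r")
      case False
      then have "s = 0" unfolding s_def by simp
      then have "B * s + B * bon b r (Suc K) = 0" using bon1 by simp
      then show ?thesis using G0 B0 by (intro red) linarith
    next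
      case True
      then have s1: "s = 1" unfolding s_def by simp
      have T3: "(int b - 1) * int (b ^ K - r mod b ^ K) \<le> Tsum b r K" using T_top[OF b] 3 unfolding e_def by auto
      show ?thesis
      proof (cases K)
        case 0
        then have "int b - 1 \<le> Tsum b r K" using T3 by simp
        then have "real b - 1 \<le> G" unfolding G_def 0 by simp
        moreover have "B * s + B * bon b r (Suc K) = B" using s1 bon1 by simp
        ultimately show ?thesis using B0 rb Bv by (intro red) linarith
      next
        case (Suc k)
        show ?thesis
        proof (cases "digit b r k = 0")
          case True0: True
          have rs: "r mod b ^ K < b ^ k" using rho_small[OF b True0] Suc by simp
          have bKk: "b ^ K = b * b ^ k" using Suc by simp
          have n1: "(b - 1) * b ^ k \<le> b ^ K - r mod b ^ K"
            using rs bKk by (simp add: diff_mult_distrib)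
          have "int ((b - 1) * b ^ k) \<le> int (b ^ K - r mod b ^ K)" using n1 by (simp only: of_nat_le_iff)
          then have n2: "(int b - 1) * int (b ^ k) \<le> int (b ^ K - r mod b ^ K)" using b by (simp add: of_nat_diff)
          have "(int b - 1) * ((int b - 1) * int (b ^ k)) \<le> (int b - 1) * int (b ^ K - r mod b ^ K)"
            using n2 b by (intro mult_left_mono) auto
          then have "(int b - 1) * ((int b - 1) * int (b ^ k)) \<le> Tsum b r K" using T3 by linarith
          then have "real_of_int ((int b - 1) * ((int b - 1) * int (b ^ k))) \<le> real_of_int (Tsum b r K)"
            by (simp only: of_int_le_iff)
          then have t4: "(real b - 1) * ((real b - 1) * real b ^ k) \<le> real_of_int (Tsum b r K)" by simp
          have bk0: "real b ^ k > 0" using b by simp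
          have "G = real_of_int (Tsum b r K) / (real b * real b ^ k)" unfolding G_def using bKk
            by (metis of_nat_mult of_nat_power)
          moreover have "(real b - 1) * ((real b - 1) * real b ^ k) / (real b * real b ^ k)
              \<le> real_of_int (Tsum b r K) / (real b * real b ^ k)"
            by (rule divide_right_mono[OF t4]) (use bk0 rb in simp)
          ultimately have "(real b - 1) * ((real b - 1) * real b ^ k) / (real b * real b ^ k) \<le> G"
            by simp
          moreover have "(real b - 1) * ((real b - 1) * real b ^ k) / (real b * real b ^ k) = (real b - 1) * (real b - 1) / real b"
            using bk0 by simp
          moreover have "real b / 4 \<le> (real b - 1) * (real b - 1) / real b"
          proof -
            have "real b * real b \<le> (2 * real b - 2) * (2 * real b - 2)" using rb by (intro mult_mono) auto
            then have "real b * real b \<le> 4 * ((real b - 1) * (real b - 1))" by (simp add: algebra_simps)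
            then show ?thesis using rb by (simp add: field_simps)
          qed
          ultimately have "real b / 4 \<le> G" by linarith
          moreover have "B * s + B * bon b r (Suc K) = B" using s1 bon1 by simp
          ultimately show ?thesis using B0 Bv by (intro red) linarith
        next
          case False0: False
          have "digit b r k \<noteq> b - 1" using True Suc 3 unfolding Sset_def e_def by auto
          moreover have "digit b r k < b" unfolding digit_def using b by simp
          ultimately have "bon b r K = 1" using False0 Suc unfolding bon_def by auto
          moreover have "B * s + B * bon b r (Suc K) = B" using s1 bon1 by simp
          ultimately show ?thesis using G0 by (intro red) simp
        qed
      qed
    qed
  qed
qed




theorem mainTheorem16:
  fixes b r :: nat
  assumes "b \<ge> 2" and "r \<ge> 1"
  shows "variance_int (mu b r) \<ge> real b / 4 * real (lambda_blocks b r)"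
proof -
  have b: "b \<ge> 2" by fact
  have rm: "r < b ^ r" by (rule r_lt[OF b])
  let ?m = "b ^ r"
  have m0: "real ?m > 0" using b by simp
  have vf: "variance_int (mu b r) =
    (\<Sum>t<?m. (real_of_int (Yv b r ?m t))^2 + (if t + r < ?m then 0 else real b)) / real ?m
    - ((\<Sum>t<?m. real_of_int (Yv b r ?m t)) / real ?m)^2" by (rule variance_formula[OF b rm])
  have s1: "(\<Sum>t<?m. real_of_int (Yv b r ?m t)) = 0"
    using Ssum1_zero[OF b, of r r] unfolding Ssum1_def by (metis of_int_sum of_int_0)
  have s2: "(\<Sum>t<?m. (real_of_int (Yv b r ?m t))^2) = real_of_int (Ssum2 b r r)"
    unfolding Ssum2_def by simp
  have "(\<Sum>t<?m. (real_of_int (Yv b r ?m t))^2) \<le> (\<Sum>t<?m. (real_of_int (Yv b r ?m t))^2 + (if t + r < ?m then 0 else real b))"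
    by (intro sum_mono) simp
  then have C: "real_of_int (Ssum2 b r r) / real b ^ r \<le> variance_int (mu b r)"
    unfolding vf s1 using s2 m0 by (simp add: divide_right_mono)
  have Bx: "real b / 4 * (real (card (Sset b r \<inter> {..<r})) + bon b r r) \<le> real_of_int (Ssum2 b r r) / real b ^ r"
    by (rule main_bound[OF b])
  moreover have "real b / 4 * (real (card (Sset b r \<inter> {..<r})) + bon b r r) \<le> real_of_int (Ssum2 b r r) / real b ^ r"
    by (rule main_bound[OF b])
  moreover have "0 \<le> bon b r r" by (simp add: bon_def split: nat.splits)
  moreover have "Sset b r \<inter> {..<r} = Sset b r"
  proof -
    have "k < r" if "k \<in> Sset b r" for k
    proof (rule ccontr)
      assume "\<not> k < r"
      then have "b ^ r \<le> b ^ k" using b by (intro power_increasing) auto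
      then have "digit b r k = 0" using rm by (intro digit_zero) simp
      then show False using that unfolding Sset_def by simp
    qed
    then show ?thesis by auto
  qed
  moreover have "lambda_blocks b r = card (Sset b r)" unfolding lambda_blocks_def Sset_def by simp
  moreover have "real b / 4 * real (card (Sset b r)) \<le> real b / 4 * (real (card (Sset b r)) + bon b r r)"
    using \<open>0 \<le> bon b r r\<close> b by (intro mult_left_mono) auto
  ultimately have "real b / 4 * real (card (Sset b r)) \<le> variance_int (mu b r)"
    using C by (metis (no_types, lifting) order_trans)
  then show ?thesis using \<open>lambda_blocks b r = card (Sset b r)\<close> by simp
qed


end
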